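(* Let $f:\mathcal{P}_2(H)\to U$ and let $X_0\in L^2(\Omega,H)$ with $\mathcal{L}(X_0)=\sum_{k=1}^N p_k\delta_{x_k}$ for some $N\in\mathbb{N}$, distinct points $x_1,\dots,x_N\in H$ and $p_k>0$ with $\sum_k p_k=1$. Assume the lift $\hat f(X)=f(\mathcal{L}(X))$ is Fréchet differentiable at $X_0$ with $D\hat f(X_0)\in\Lambda_2^{\mathbb{P}}(H,U)$, and let $m(A)u:=D\hat f(X_0)(u\mathbf{1}_A)$ be the associated vector measure. Then for all $A\in\mathcal{F}$ and $u\in H$, $$m(A)u=\int \mathbb{P}(A\mid X_0)\,u\,dm,$$ where $\mathbb{P}(A\mid X_0)=\mathbb{E}[\mathbf{1}_A\mid X_0]$.
   Context: $(\Omega,\mathcal{F},\mathbb{P})$ is a complete atomless probability space, $\Omega$ Polish with Borel $\sigma$-field $\mathcal{F}$; $H,U$ separable real Hilbert spaces. For bounded linear $L:L^2(\Omega,H)\to U$, $|\!|\!|L|\!|\!|_{2,\mathbb{P}}:=\sup\{\sum_{i}\|L(\mathbf{1}_{A_i}x_i)\|_U: \sum_i\mathbf{1}_{A_i}x_i \text{ step function with pairwise disjoint } A_i\in\mathcal{F},\ x_i\in H,\ \mathbb{E}\|\sum_i\mathbf{1}_{A_i}x_i\|_H^2\le1\}$ and $\Lambda_2^{\mathbb{P}}(H,U)$ is the set of such $L$ with finite norm. For $L\in\Lambda_2^{\mathbb{P}}(H,U)$ the map $m(A)u=L(u\mathbf{1}_A)$ is a countably additive vector measure $\mathcal{F}\to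 L(H,U)$; its integral is $\int\sum_i\mathbf{1}_{A_i}x_i\,dm=\sum_i m(A_i)x_i$ on step functions, extended to $Y\in L^2(\Omega,H)$ as $\lim_n\int Y_n\,dm$ for step functions $Y_n\to Y$ in $L^2$ and a.s. *)

theory Defs
  imports "HOL-Probability.Probability"
begin

definition memL2 :: "'w measure \<Rightarrow> ('w \<Rightarrow> 'h::real_normed_vector) \<Rightarrow> bool" where
  "memL2 M Y \<longleftrightarrow> Y \<in> borel_measurable M \<and> integrable M (\<lambda>w. (norm (Y w))\<^sup>2)"

definition l2norm :: "'w measure \<Rightarrow> ('w \<Rightarrow> 'h::real_normed_vector) \<Rightarrow> real" where
  "l2norm M Y = sqrt (\<integral>w. (norm (Y w))\<^sup>2 \<partial>M)"

definition bounded_linear_L2 :: "'w measure \<Rightarrow> (('w \<Rightarrow> 'h::real_normed_vector) \<Rightarrow> 'u::real_normed_vector) \<Rightarrow> bool" where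
  "bounded_linear_L2 M L \<longleftrightarrow>
     (\<forall>Y Z. memL2 M Y \<longrightarrow> memL2 M Z \<longrightarrow> L (\<lambda>w. Y w + Z w) = L Y + L Z) \<and>
     (\<forall>Y c. memL2 M Y \<longrightarrow> L (\<lambda>w. c *\<^sub>R Y w) = c *\<^sub>R L Y) \<and>
     (\<exists>K. \<forall>Y. memL2 M Y \<longrightarrow> norm (L Y) \<le> K * l2norm M Y)"

definition step_fun :: "('w set \<times> 'h::real_vector) list \<Rightarrow> 'w \<Rightarrow> 'h" where
  "step_fun xs w = (\<Sum>(A, x)\<leftarrow>xs. indicator A w *\<^sub>R x)"

definition step_rep :: "'w measure \<Rightarrow> ('w set \<times> 'h) list \<Rightarrow> bool" where
  "step_rep M xs \<longleftrightarrow> (\<forall>i<length xs. fst (xs ! i) \<in> sets M) \<and>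
     disjoint_family_on (\<lambda>i. fst (xs ! i)) {..<length xs}"

text \<open>The space Lambda_2^P(H,U): bounded linear L with finite triple norm.\<close>
definition Lambda2 :: "'w measure \<Rightarrow> (('w \<Rightarrow> 'h::real_normed_vector) \<Rightarrow> 'u::real_normed_vector) \<Rightarrow> bool" where
  "Lambda2 M L \<longleftrightarrow> bounded_linear_L2 M L \<and>
     (\<exists>C. \<forall>xs. step_rep M xs \<longrightarrow> (\<integral>w. (norm (step_fun xs w))\<^sup>2 \<partial>M) \<le> 1 \<longrightarrow>
        (\<Sum>(A, x)\<leftarrow>xs. norm (L (\<lambda>w. indicator A w *\<^sub>R x))) \<le> C)"

definition vmeasure :: "(('w \<Rightarrow> 'h::real_vector) \<Rightarrow> 'u) \<Rightarrow> 'w set \<Rightarrow> 'h \<Rightarrow> 'u" where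
  "vmeasure L A u = L (\<lambda>w. indicator A w *\<^sub>R u)"

definition step_int :: "(('w \<Rightarrow> 'h::real_vector) \<Rightarrow> 'u::real_vector) \<Rightarrow> ('w set \<times> 'h) list \<Rightarrow> 'u" where
  "step_int L xs = (\<Sum>(A, x)\<leftarrow>xs. vmeasure L A x)"

definition vm_integral :: "'w measure \<Rightarrow> (('w \<Rightarrow> 'h::real_normed_vector) \<Rightarrow> 'u::real_normed_vector)
    \<Rightarrow> ('w \<Rightarrow> 'h) \<Rightarrow> 'u" where
  "vm_integral M L Y = (THE v. \<forall>Ys. (\<forall>n. step_rep M (Ys n)) \<longrightarrow>
       (\<lambda>n. l2norm M (\<lambda>w. step_fun (Ys n) w - Y w)) \<longlonglongrightarrow> 0 \<longrightarrow>
       (AE w in M. (\<lambda>n. step_fun (Ys n) w) \<longlonglongrightarrow> Y w) \<longrightarrow>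
       (\<lambda>n. step_int L (Ys n)) \<longlonglongrightarrow> v)"

definition lift_frechet :: "'w measure \<Rightarrow> ('h::{real_normed_vector,second_countable_topology} measure \<Rightarrow> 'u::real_normed_vector)
    \<Rightarrow> ('w \<Rightarrow> 'h) \<Rightarrow> (('w \<Rightarrow> 'h) \<Rightarrow> 'u) \<Rightarrow> bool" where
  "lift_frechet M f X0 L \<longleftrightarrow> bounded_linear_L2 M L \<and>
     (\<forall>e>0. \<exists>d>0. \<forall>Y. memL2 M Y \<longrightarrow> l2norm M Y < d \<longrightarrow>
        norm (f (distr M borel (\<lambda>w. X0 w + Y w)) - f (distr M borel X0) - L Y) \<le> e * l2norm M Y)"

definition atomless :: "'w measure \<Rightarrow> bool" where
  "atomless M \<longleftrightarrow> (\<forall>A\<in>sets M. 0 < measure M A \<longrightarrow>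
     (\<exists>B\<in>sets M. B \<subseteq> A \<and> 0 < measure M B \<and> measure M B < measure M A))"

end

theory Submission
  imports Defs
begin


lemma (in finite_measure) small_subset:
  assumes "atomless M" "A \<in> sets M" "0 < measure M A" "0 < e"
  shows "\<exists>B\<in>sets M. B \<subseteq> A \<and> 0 < measure M B \<and> measure M B < e"
proof -
  have halve: "\<exists>B\<in>sets M. B \<subseteq> A \<and> 0 < measure M B \<and> measure M B \<le> measure M A / 2^n" for n
  proof (induction n)
    case 0 show ?case using assms by auto
  next
    case (Suc n)
    then obtain B where B: "B\<in>sets M" "B \<subseteq> A" "0 < measure M B" "measure M B \<le> measure M A / 2^n" by blast
    then obtain C where C: "C \<in> sets M" "C \<subseteq> B" "0 < measure M C" "measure M C < measure M B"
      using assms(1) unfolding atomless_def by blast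
    have mBC: "measure M (B - C) = measure M B - measure M C" using finite_measure_Diff C B by simp
    have h: "measure M B / 2 \<le> measure M A / 2^(Suc n)" using B(4) by (simp add: field_simps)
    show ?case
    proof (cases "measure M C \<le> measure M B / 2")
      case True then show ?thesis using C B h by (intro bexI[of _ C]) auto
    next
      case False then show ?thesis using C B mBC h by (intro bexI[of _ "B - C"]) auto
    qed
  qed
  obtain n where n: "measure M A / e < 2^n" using real_arch_pow[of 2 "measure M A / e"] by auto
  then have "measure M A / 2^n < e" using assms(4) by (simp add: field_simps)
  moreover obtain B where "B\<in>sets M" "B \<subseteq> A" "0 < measure M B" "measure M B \<le> measure M A / 2^n"
    using halve[of n] by blast
  ultimately show ?thesis by (intro bexI[of _ B]) auto
qed

lemma (in finite_measure) sierpinski: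
  assumes "atomless M" "A \<in> sets M" "0 \<le> t" "t \<le> measure M A"
  shows "\<exists>C\<in>sets M. C \<subseteq> A \<and> measure M C = t"
proof -
  define S where "S C = {measure M D | D. D \<in> sets M \<and> D \<subseteq> A - C \<and> measure M C + measure M D \<le> t}" for C
  define good where "good C D \<longleftrightarrow> D \<in> sets M \<and> D \<subseteq> A - C \<and> measure M C + measure M D \<le> t
      \<and> Sup (S C) \<le> 2 * measure M D" for C D
  have bdd: "bdd_above (S C)" if "C \<in> sets M" for C
    unfolding S_def bdd_above_def using that by (intro exI[of _ t]) (auto intro: add_increasing[OF measure_nonneg] order.trans)
  have ex: "\<exists>D. good C D" if C: "C \<in> sets M" "measure M C \<le> t" for C
  proof -
    have ne: "0 \<in> S C" unfolding S_def using C by (intro CollectI exI[of _ "{}"]) auto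
    show ?thesis
    proof (cases "Sup (S C) \<le> 0")
      case True then show ?thesis unfolding good_def using C by (intro exI[of _ "{}"]) auto
    next
      case False
      then have "Sup (S C) / 2 < Sup (S C)" by simp
      then obtain y where "y \<in> S C" "Sup (S C) / 2 < y" using less_cSup_iff[of "S C"] ne bdd[OF C(1)] by blast
      then show ?thesis unfolding good_def S_def by auto
    qed
  qed
  define Dn where "Dn C = (SOME D. good C D)" for C
  have gen: "good C (Dn C)" if "C \<in> sets M" "measure M C \<le> t" for C
    unfolding Dn_def by (rule someI_ex, rule ex) (use that in auto)
  define Cs where "Cs n = ((\<lambda>C. C \<union> Dn C) ^^ n) {}" for n
  have CsS: "Cs (Suc n) = Cs n \<union> Dn (Cs n)" for n unfolding Cs_def by simp
  have inv: "Cs n \<in> sets M \<and> Cs n \<subseteq> A \<and> measure M (Cs n) \<le> t \<and> good (Cs n) (Dn (Cs n))" for n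
  proof (induction n)
    case 0
    have "good {} (Dn {})" by (rule gen) (use assms in auto)
    then show ?case using assms by (simp add: Cs_def)
  next
    case (Suc n)
    then have g: "good (Cs n) (Dn (Cs n))" and c: "Cs n \<in> sets M" "Cs n \<subseteq> A" by auto
    then have m: "measure M (Cs (Suc n)) = measure M (Cs n) + measure M (Dn (Cs n))"
      unfolding CsS good_def by (intro finite_measure_Union) auto
    have 1: "Cs (Suc n) \<in> sets M \<and> Cs (Suc n) \<subseteq> A \<and> measure M (Cs (Suc n)) \<le> t"
      using g c m unfolding CsS good_def by auto
    then have "good (Cs (Suc n)) (Dn (Cs (Suc n)))" by (intro gen) auto
    with 1 show ?case by blast
  qed
  have mS: "measure M (Cs (Suc n)) = measure M (Cs n) + measure M (Dn (Cs n))" for n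
    using inv[of n] unfolding CsS good_def by (intro finite_measure_Union) auto
  define C where "C = (\<Union>n. Cs n)"
  have inc: "incseq Cs" by (rule incseq_SucI) (simp add: CsS)
  have Csets: "range Cs \<subseteq> sets M" using inv by auto
  have lim: "(\<lambda>n. measure M (Cs n)) \<longlonglongrightarrow> measure M C"
    unfolding C_def by (rule finite_Lim_measure_incseq[OF Csets inc])
  have CM: "C \<in> sets M" using Csets unfolding C_def by auto
  have CA: "C \<subseteq> A" using inv unfolding C_def by auto
  have Ct: "measure M C \<le> t" using lim inv by (intro LIMSEQ_le_const2[OF lim]) auto
  have limD: "(\<lambda>n. measure M (Dn (Cs n))) \<longlonglongrightarrow> 0"
  proof -
    have "(\<lambda>n. measure M (Cs (Suc n)) - measure M (Cs n)) \<longlonglongrightarrow> measure M C - measure M C"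
      by (intro tendsto_diff lim LIMSEQ_Suc)
    then show ?thesis using mS by simp
  qed
  have "measure M C = t"
  proof (rule ccontr)
    assume "measure M C \<noteq> t"
    with Ct have lt: "measure M C < t" by simp
    have "measure M (A - C) = measure M A - measure M C" using finite_measure_Diff CM CA assms by simp
    then have "0 < measure M (A - C)" using lt assms by simp
    then obtain E where E: "E \<in> sets M" "E \<subseteq> A - C" "0 < measure M E" "measure M E < t - measure M C"
      using small_subset[OF assms(1), of "A - C" "t - measure M C"] CM assms lt by auto
    have le: "measure M E \<le> 2 * measure M (Dn (Cs n))" for n
    proof -
      have mc: "measure M (Cs n) \<le> measure M C" using CM unfolding C_def
        by (intro finite_measure_mono) auto
      have "E \<subseteq> A - Cs n" using E(2) unfolding C_def by auto
      then have "measure M E \<in> S (Cs n)" unfolding S_def using E mc by (intro CollectI exI[of _ E]) auto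
      then have "measure M E \<le> Sup (S (Cs n))" using bdd inv by (intro cSup_upper) auto
      also have "\<dots> \<le> 2 * measure M (Dn (Cs n))" using inv[of n] unfolding good_def by auto
      finally show ?thesis .
    qed
    have "(\<lambda>n. 2 * measure M (Dn (Cs n))) \<longlonglongrightarrow> 2 * 0" by (intro tendsto_mult limD tendsto_const)
    then have "measure M E \<le> 2 * 0" by (rule LIMSEQ_le_const) (use le in auto)
    with E show False by simp
  qed
  with CM CA show ?thesis by blast
qed


lemma (in finite_measure) phi_linear:
  fixes g :: "'a set \<Rightarrow> 'b::real_normed_vector"
  assumes atl: "atomless M" and B: "B \<in> sets M" "0 < measure M B"
   and inv: "\<And>A A'. A \<in> sets M \<Longrightarrow> A' \<in> sets M \<Longrightarrow> A \<subseteq> B \<Longrightarrow> A' \<subseteq> B \<Longrightarrow>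
         measure M A = measure M A' \<Longrightarrow> g A = g A'"
   and add: "\<And>A A'. A \<in> sets M \<Longrightarrow> A' \<in> sets M \<Longrightarrow> A \<inter> A' = {} \<Longrightarrow> g (A \<union> A') = g A + g A'"
   and bd: "\<And>A. A \<in> sets M \<Longrightarrow> norm (g A) \<le> K * sqrt (measure M A)"
   and A: "A \<in> sets M" "A \<subseteq> B"
  shows "g A = (measure M A / measure M B) *\<^sub>R g B"
proof -
  define p where "p = measure M B"
  have p0: "0 < p" using B p_def by simp
  have ex: "\<exists>C. C \<in> sets M \<and> C \<subseteq> B \<and> measure M C = s" if "0 \<le> s" "s \<le> p" for s
    using sierpinski[OF atl B(1) that[unfolded p_def]] by blast
  define \<phi> where "\<phi> s = g (SOME C. C \<in> sets M \<and> C \<subseteq> B \<and> measure M C = s)" for s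
  have \<phi>eq: "\<phi> (measure M C) = g C" if C: "C \<in> sets M" "C \<subseteq> B" for C
  proof -
    have "measure M C \<le> p" unfolding p_def using C B by (intro finite_measure_mono) auto
    then have "\<exists>C'. C' \<in> sets M \<and> C' \<subseteq> B \<and> measure M C' = measure M C" by (intro ex) auto
    from someI_ex[OF this] show ?thesis unfolding \<phi>_def using C by (intro inv) auto
  qed
  have g0: "g {} = 0" using add[of "{}" "{}"] by simp
  have \<phi>0: "\<phi> 0 = 0" using \<phi>eq[of "{}"] g0 by simp
  have \<phi>add: "\<phi> (s + s') = \<phi> s + \<phi> s'" if ss: "0 \<le> s" "0 \<le> s'" "s + s' \<le> p" for s s'
  proof -
    obtain C where C: "C \<in> sets M" "C \<subseteq> B" "measure M C = s + s'" using ex[of "s + s'"] ss by auto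
    obtain D where D: "D \<in> sets M" "D \<subseteq> C" "measure M D = s" using sierpinski[OF atl C(1), of s] ss C by auto
    have mCD: "measure M (C - D) = s'" using finite_measure_Diff[OF C(1) D(1) D(2)] C D by simp
    have "g C = g (D \<union> (C - D))" using D by (metis Diff_partition)
    also have "\<dots> = g D + g (C - D)" using C D by (intro add) auto
    moreover have "D \<subseteq> B" "C - D \<subseteq> B" using C D by auto
    ultimately show ?thesis using \<phi>eq[OF C(1,2)] \<phi>eq[of D] \<phi>eq[of "C - D"] C D mCD by auto
  qed
  have \<phi>mul: "\<phi> (real j * s) = real j *\<^sub>R \<phi> s" if "0 \<le> s" "real j * s \<le> p" for j s
    using that
  proof (induction j)
    case 0 then show ?case using \<phi>0 by simp
  next
    case (Suc j)
    have "real j * s \<le> real (Suc j) * s" using Suc.prems by (simp add: mult_right_mono)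
    then have IH: "\<phi> (real j * s) = real j *\<^sub>R \<phi> s" using Suc by auto
    have "\<phi> (real (Suc j) * s) = \<phi> (s + real j * s)" by (simp add: algebra_simps)
    also have "\<dots> = \<phi> s + \<phi> (real j * s)" using Suc.prems by (intro \<phi>add) (auto simp: algebra_simps)
    finally show ?case using IH by (simp add: algebra_simps)
  qed
  have \<phi>bd: "norm (\<phi> s) \<le> \<bar>K\<bar> * sqrt s" if ss: "0 \<le> s" "s \<le> p" for s
  proof -
    obtain C where C: "C \<in> sets M" "C \<subseteq> B" "measure M C = s" using ex[OF ss] by blast
    have "norm (\<phi> s) \<le> K * sqrt s" using bd[OF C(1)] \<phi>eq[OF C(1,2)] C(3) by simp
    also have "\<dots> \<le> \<bar>K\<bar> * sqrt s" using ss by (intro mult_right_mono) auto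
    finally show ?thesis .
  qed
  define C0 where "C0 = \<bar>K\<bar> * sqrt p + norm (\<phi> p)"
  have main: "\<phi> a = (a / p) *\<^sub>R \<phi> p" if a: "0 \<le> a" "a \<le> p" for a
  proof -
    define D where "D = norm (\<phi> a - (a / p) *\<^sub>R \<phi> p)"
    have Dn: "D \<le> C0 / sqrt (real n)" if n: "n \<ge> 1" for n :: nat
    proof -
      have n0: "real n > 0" using n by simp
      define j where "j = nat \<lfloor>a * n / p\<rfloor>"
      have an0: "0 \<le> a * n / p" using a p0 by simp
      have j1: "real j \<le> a * n / p" unfolding j_def using an0 by linarith
      have j2: "a * n / p < real j + 1" unfolding j_def using an0 by linarith
      define q where "q = real j * (p / n)"
      have q1: "q \<le> a" unfolding q_def using j1 n0 p0 by (simp add: field_simps)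
      have e: "a * n < (real j + 1) * p" using j2 p0 by (simp add: field_simps)
      have q2: "a - q < p / n" unfolding q_def using mult_strict_right_mono[OF e n0] n0 p0
        by (simp add: field_simps)
      have q0: "0 \<le> q" unfolding q_def using p0 n0 by simp
      have pn: "\<phi> p = real n *\<^sub>R \<phi> (p / n)"
        using \<phi>mul[of "p / n" n] p0 n0 by simp
      have \<phi>pn: "\<phi> (p / n) = (1 / real n) *\<^sub>R \<phi> p" using pn n0 by simp
      have \<phi>q: "\<phi> q = (q / p) *\<^sub>R \<phi> p"
      proof -
        have "\<phi> q = real j *\<^sub>R \<phi> (p / n)" unfolding q_def using q1 a p0 n0 q_def
          by (intro \<phi>mul) auto
        also have "\<dots> = (q / p) *\<^sub>R \<phi> p" unfolding \<phi>pn q_def using p0 n0 by simp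
        finally show ?thesis .
      qed
      have \<phi>a: "\<phi> a = \<phi> q + \<phi> (a - q)" using \<phi>add[of q "a - q"] q0 q1 a by simp
      have "\<phi> a - (a / p) *\<^sub>R \<phi> p = \<phi> (a - q) + ((q - a) / p) *\<^sub>R \<phi> p"
        unfolding \<phi>a \<phi>q by (simp add: algebra_simps diff_divide_distrib)
      then have "D \<le> norm (\<phi> (a - q)) + norm (((q - a) / p) *\<^sub>R \<phi> p)"
        unfolding D_def by (metis norm_triangle_ineq)
      also have "norm (\<phi> (a - q)) \<le> \<bar>K\<bar> * sqrt (p / n)"
      proof -
        have "norm (\<phi> (a - q)) \<le> \<bar>K\<bar> * sqrt (a - q)" using q1 q0 a by (intro \<phi>bd) auto
        also have "\<dots> \<le> \<bar>K\<bar> * sqrt (p / n)" using q2 by (intro mult_left_mono) auto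
        finally show ?thesis .
      qed
      also have "norm (((q - a) / p) *\<^sub>R \<phi> p) \<le> (1 / n) * norm (\<phi> p)"
      proof -
        have "\<bar>(q - a) / p\<bar> \<le> 1 / n" using q1 q2 p0 n0 by (simp add: field_simps abs_if)
        then have "\<bar>(q - a) / p\<bar> * norm (\<phi> p) \<le> (1 / n) * norm (\<phi> p)" by (intro mult_right_mono) auto
        then show ?thesis by simp
      qed
      also have "\<bar>K\<bar> * sqrt (p / n) + (1 / n) * norm (\<phi> p) \<le> C0 / sqrt n"
      proof -
        have "real n * 1 \<le> real n * real n" using n by (intro mult_left_mono) auto
        then have "real n \<le> (real n)\<^sup>2" by (simp add: power2_eq_square)
        then have "sqrt (real n) \<le> sqrt ((real n)\<^sup>2)" by (rule real_sqrt_le_mono)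
        then have sn: "sqrt (real n) \<le> real n" by simp
        have sp: "sqrt (p / n) = sqrt p / sqrt n" by (simp add: real_sqrt_divide)
        have "1 / real n \<le> 1 / sqrt n" using sn n0 by (intro divide_left_mono) auto
        then have "(1 / n) * norm (\<phi> p) \<le> (1 / sqrt n) * norm (\<phi> p)" by (intro mult_right_mono) auto
        then show ?thesis unfolding C0_def sp by (simp add: add_divide_distrib)
      qed
      finally show ?thesis by simp
    qed
    have "D = 0"
    proof (rule ccontr)
      assume "D \<noteq> 0"
      then have D0: "D > 0" unfolding D_def by simp
      have C00: "C0 \<ge> 0" unfolding C0_def using p0 by (intro add_nonneg_nonneg mult_nonneg_nonneg) auto
      obtain n :: nat where nn: "real n > (C0 / D)^2 + 1" using reals_Archimedean2 by blast
      have "(C0 / D)^2 \<ge> 0" by simp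
      then have "real n > 1" using nn by linarith
      then have n1: "n \<ge> 1" by simp
      have "C0 / D < sqrt n"
      proof -
        have "C0 / D = sqrt ((C0 / D)^2)" using C00 D0 by simp
        also have "\<dots> < sqrt n" using nn by (intro real_sqrt_less_mono) linarith
        finally show ?thesis .
      qed
      then have "C0 / sqrt n < D" using D0 n1 by (simp add: field_simps)
      with Dn[OF n1] show False by simp
    qed
    then show ?thesis unfolding D_def by simp
  qed
  have "measure M A \<le> p" unfolding p_def using A B by (intro finite_measure_mono) auto
  then have "\<phi> (measure M A) = (measure M A / p) *\<^sub>R \<phi> p" by (intro main) auto
  moreover have "\<phi> p = g B" unfolding p_def by (rule \<phi>eq[OF B(1)]) simp
  ultimately show ?thesis using \<phi>eq[OF A] p_def by simp
qed



lemma memL2_bounded: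
  assumes "finite_measure M" "Y \<in> borel_measurable M" "\<And>w. norm (Y w) \<le> B"
  shows "memL2 M Y"
  unfolding memL2_def
proof (intro conjI assms(2))
  interpret finite_measure M by fact
  show "integrable M (\<lambda>w. (norm (Y w))\<^sup>2)"
  proof (rule integrable_const_bound[where B="B\<^sup>2"])
    show "AE w in M. norm ((norm (Y w))\<^sup>2) \<le> B\<^sup>2"
      using assms(3) by (auto intro!: power_mono)
  qed (use assms(2) in auto)
qed

lemma memL2_ind:
  assumes "finite_measure M" "A \<in> sets M"
  shows "memL2 M (\<lambda>w. indicator A w *\<^sub>R u)"
  by (rule memL2_bounded[where B="norm u"]) (use assms in \<open>auto simp: indicator_def\<close>)

lemma memL2_add:
  fixes Y Z :: "'w \<Rightarrow> 'h::{real_normed_vector, second_countable_topology}"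
  assumes "memL2 M Y" "memL2 M Z"
  shows "memL2 M (\<lambda>w. Y w + Z w)"
  unfolding memL2_def
proof
  show m: "(\<lambda>w. Y w + Z w) \<in> borel_measurable M" using assms unfolding memL2_def by auto
  have i: "integrable M (\<lambda>w. 2 * (norm (Y w))\<^sup>2 + 2 * (norm (Z w))\<^sup>2)"
    using assms unfolding memL2_def by auto
  show "integrable M (\<lambda>w. (norm (Y w + Z w))\<^sup>2)"
  proof (rule Bochner_Integration.integrable_bound[OF i])
    show "(\<lambda>w. (norm (Y w + Z w))\<^sup>2) \<in> borel_measurable M" using m by measurable
    show "AE w in M. norm ((norm (Y w + Z w))\<^sup>2) \<le> norm (2 * (norm (Y w))\<^sup>2 + 2 * (norm (Z w))\<^sup>2)"
    proof (rule AE_I2)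
      fix w
      have "norm (Y w + Z w) \<le> norm (Y w) + norm (Z w)" by (rule norm_triangle_ineq)
      then have "(norm (Y w + Z w))\<^sup>2 \<le> (norm (Y w) + norm (Z w))\<^sup>2" by (intro power_mono) auto
      also have "\<dots> \<le> 2 * (norm (Y w))\<^sup>2 + 2 * (norm (Z w))\<^sup>2"
        by (smt (verit, del_insts) sum_squares_bound power2_sum)
      finally show "norm ((norm (Y w + Z w))\<^sup>2) \<le> norm (2 * (norm (Y w))\<^sup>2 + 2 * (norm (Z w))\<^sup>2)"
        by simp
    qed
  qed
qed

lemma memL2_scale:
  assumes "memL2 M Y"
  shows "memL2 M (\<lambda>w. c *\<^sub>R Y w)"
proof -
  have "(\<lambda>w. (norm (c *\<^sub>R Y w))\<^sup>2) = (\<lambda>w. c\<^sup>2 * (norm (Y w))\<^sup>2)"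
    by (simp add: power_mult_distrib)
  then show ?thesis using assms unfolding memL2_def by auto
qed

lemma memL2_diff:
  fixes Y Z :: "'w \<Rightarrow> 'h::{real_normed_vector, second_countable_topology}"
  assumes "memL2 M Y" "memL2 M Z"
  shows "memL2 M (\<lambda>w. Y w - Z w)"
  using memL2_add[OF assms(1) memL2_scale[OF assms(2), of "-1"]] by simp

lemma memL2_zero: "memL2 M (\<lambda>w. 0)"
  unfolding memL2_def by simp

lemma memL2_AE:
  assumes "memL2 M Z" "Y \<in> borel_measurable M" "AE w in M. Y w = Z w"
  shows "memL2 M Y"
  unfolding memL2_def
proof
  show "integrable M (\<lambda>w. (norm (Y w))\<^sup>2)"
    using assms unfolding memL2_def
    by (subst integrable_cong_AE[where g="\<lambda>w. (norm (Z w))\<^sup>2"]) (auto elim: AE_mp)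
qed fact

lemma l2norm_AE0:
  assumes "AE w in M. Y w = 0"
  shows "l2norm M Y = 0"
proof -
  have "(\<integral>w. (norm (Y w))\<^sup>2 \<partial>M) = 0"
    by (rule integral_eq_zero_AE) (use assms in \<open>auto elim: AE_mp\<close>)
  then show ?thesis unfolding l2norm_def by simp
qed

lemma l2norm_ind:
  assumes "finite_measure M" "A \<in> sets M"
  shows "l2norm M (\<lambda>w. indicator A w *\<^sub>R v) = norm v * sqrt (measure M A)"
proof -
  interpret finite_measure M by fact
  have "(\<lambda>w. (norm (indicator A w *\<^sub>R v))\<^sup>2) = (\<lambda>w. indicator A w * (norm v)\<^sup>2)"
    by (auto simp: indicator_def)
  then have "(\<integral>w. (norm (indicator A w *\<^sub>R v))\<^sup>2 \<partial>M) = measure M A * (norm v)\<^sup>2"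
    using assms(2) sets.Int_space_eq2 by simp
  then show ?thesis unfolding l2norm_def by (simp add: real_sqrt_mult)
qed

context
  fixes M :: "'w measure" and L :: "('w \<Rightarrow> 'h::{real_normed_vector, second_countable_topology}) \<Rightarrow> 'u::real_normed_vector"
  assumes bl: "bounded_linear_L2 M L"
begin

lemma L_add: "memL2 M Y \<Longrightarrow> memL2 M Z \<Longrightarrow> L (\<lambda>w. Y w + Z w) = L Y + L Z"
  using bl unfolding bounded_linear_L2_def by blast

lemma L_scale: "memL2 M Y \<Longrightarrow> L (\<lambda>w. c *\<^sub>R Y w) = c *\<^sub>R L Y"
  using bl unfolding bounded_linear_L2_def by blast

lemma L_diff: "memL2 M Y \<Longrightarrow> memL2 M Z \<Longrightarrow> L (\<lambda>w. Y w - Z w) = L Y - L Z"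
  using L_add[of Y "\<lambda>w. (-1) *\<^sub>R Z w"] L_scale[of Z "-1"] memL2_scale[of M Z "-1"] by simp

lemma L_zero: "L (\<lambda>w. 0) = 0"
  using L_scale[OF memL2_zero, of 0] by simp

lemma L_bound: "\<exists>K. \<forall>Y. memL2 M Y \<longrightarrow> norm (L Y) \<le> K * l2norm M Y"
  using bl unfolding bounded_linear_L2_def by blast

lemma L_null: "memL2 M Y \<Longrightarrow> AE w in M. Y w = 0 \<Longrightarrow> L Y = 0"
proof -
  assume a: "memL2 M Y" "AE w in M. Y w = 0"
  obtain K where "\<forall>Y. memL2 M Y \<longrightarrow> norm (L Y) \<le> K * l2norm M Y" using L_bound by blast
  from this[rule_format, OF a(1)] l2norm_AE0[OF a(2)] show "L Y = 0" by simp
qed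

lemma L_AE_eq: "memL2 M Y \<Longrightarrow> memL2 M Z \<Longrightarrow> AE w in M. Y w = Z w \<Longrightarrow> L Y = L Z"
  using L_diff[of Y Z] L_null[of "\<lambda>w. Y w - Z w"] memL2_diff[of M Y Z] by auto

lemma L_sum:
  assumes "finite S" "\<And>k. k \<in> S \<Longrightarrow> memL2 M (Y k)"
  shows "memL2 M (\<lambda>w. \<Sum>k\<in>S. Y k w) \<and> L (\<lambda>w. \<Sum>k\<in>S. Y k w) = (\<Sum>k\<in>S. L (Y k))"
  using assms
proof (induction S rule: finite_induct)
  case empty then show ?case using L_zero memL2_zero by simp
next
  case (insert a S)
  then have h: "memL2 M (\<lambda>w. \<Sum>k\<in>S. Y k w)" "L (\<lambda>w. \<Sum>k\<in>S. Y k w) = (\<Sum>k\<in>S. L (Y k))"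
    "memL2 M (Y a)" by auto
  have "memL2 M (\<lambda>w. Y a w + (\<Sum>k\<in>S. Y k w))" by (rule memL2_add) (use h in auto)
  moreover have "L (\<lambda>w. Y a w + (\<Sum>k\<in>S. Y k w)) = L (Y a) + L (\<lambda>w. \<Sum>k\<in>S. Y k w)"
    using L_add[of "Y a" "\<lambda>w. \<Sum>k\<in>S. Y k w"] h by simp
  ultimately show ?case using insert h by simp
qed

lemma step_int_L:
  assumes "finite_measure M" "\<forall>(A, x)\<in>set xs. A \<in> sets M"
  shows "memL2 M (step_fun xs) \<and> step_int L xs = L (step_fun xs)"
  using assms(2)
proof (induction xs)
  case Nil
  have "step_fun ([] :: ('w set \<times> 'h) list) = (\<lambda>w. 0)" unfolding step_fun_def by (rule ext) simp
  moreover have "step_int L ([] :: ('w set \<times> 'h) list) = 0" unfolding step_int_def by simp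
  ultimately show ?case using L_zero memL2_zero[of M] by metis
next
  case (Cons a xs)
  obtain A x where a: "a = (A, x)" by force
  have sf: "step_fun (a # xs) = (\<lambda>w. indicator A w *\<^sub>R x + step_fun xs w)"
    unfolding step_fun_def a by (rule ext) simp
  have A: "A \<in> sets M" using Cons.prems a by auto
  have IH: "memL2 M (step_fun xs)" "step_int L xs = L (step_fun xs)" using Cons by auto
  have mi: "memL2 M (\<lambda>w. indicator A w *\<^sub>R x)" by (rule memL2_ind[OF assms(1) A])
  have "step_int L (a # xs) = vmeasure L A x + step_int L xs" unfolding step_int_def a by simp
  also have "\<dots> = L (step_fun (a # xs))" unfolding sf vmeasure_def IH(2)
    using L_add[OF mi IH(1)] by simp
  finally show ?case using memL2_add[OF mi IH(1)] sf by simp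
qed

end



lemma law_swap:
  fixes X0 :: "'w \<Rightarrow> 'h::{real_normed_vector, second_countable_topology}"
  assumes fm: "finite_measure M" and X0m: "X0 \<in> borel_measurable M"
   and A: "A1 \<in> sets M" "A2 \<in> sets M" "A1 \<subseteq> X0 -` {b} \<inter> space M" "A2 \<subseteq> X0 -` {b} \<inter> space M"
     "measure M A1 = measure M A2"
  shows "distr M borel (\<lambda>w. X0 w + indicator A1 w *\<^sub>R v) = distr M borel (\<lambda>w. X0 w + indicator A2 w *\<^sub>R v)"
proof -
  interpret finite_measure M by fact
  define Bk where "Bk = X0 -` {b} \<inter> space M"
  have Bk: "Bk \<in> sets M" unfolding Bk_def using measurable_sets[OF X0m, of "{b}"] by simp
  have key: "measure M ((\<lambda>w. X0 w + indicator A w *\<^sub>R v) -` S \<inter> space M) =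
      measure M (X0 -` S \<inter> space M - Bk) + (if b + v \<in> S then measure M A else 0)
      + (if b \<in> S then measure M Bk - measure M A else 0)"
    if AA: "A \<in> sets M" "A \<subseteq> Bk" and S: "S \<in> sets borel" for A S
  proof -
    define R where "R = X0 -` S \<inter> space M - Bk"
    have R: "R \<in> sets M" unfolding R_def using measurable_sets[OF X0m S] Bk by auto
    define E1 where "E1 = (if b + v \<in> S then A else {})"
    define E2 where "E2 = (if b \<in> S then Bk - A else {})"
    have eq: "(\<lambda>w. X0 w + indicator A w *\<^sub>R v) -` S \<inter> space M = R \<union> E1 \<union> E2"
      using AA unfolding R_def E1_def E2_def Bk_def by (auto simp: indicator_def of_bool_def split: if_splits)
    have s1: "E1 \<in> sets M" "E2 \<in> sets M" unfolding E1_def E2_def using AA Bk by auto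
    have m1: "measure M (R \<union> E1) = measure M R + measure M E1"
      by (rule finite_measure_Union) (use R s1 AA in \<open>auto simp: R_def E1_def\<close>)
    have m2: "measure M (R \<union> E1 \<union> E2) = measure M (R \<union> E1) + measure M E2"
      by (rule finite_measure_Union) (use R s1 AA in \<open>auto simp: R_def E1_def E2_def\<close>)
    have m3: "measure M E1 = (if b + v \<in> S then measure M A else 0)" unfolding E1_def by simp
    have m4: "measure M E2 = (if b \<in> S then measure M Bk - measure M A else 0)"
      unfolding E2_def using finite_measure_Diff[OF Bk AA(1) AA(2)] by simp
    show ?thesis unfolding R_def[symmetric] eq m2 m1 m3 m4 by simp
  qed
  show ?thesis
  proof (rule measure_eqI)
    fix S assume "S \<in> sets (distr M borel (\<lambda>w. X0 w + indicator A1 w *\<^sub>R v))"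
    then have S: "S \<in> sets borel" by simp
    have m1: "(\<lambda>w. X0 w + indicator A1 w *\<^sub>R v) \<in> borel_measurable M" using A(1) X0m by measurable
    have m2: "(\<lambda>w. X0 w + indicator A2 w *\<^sub>R v) \<in> borel_measurable M" using A(2) X0m by measurable
    show "emeasure (distr M borel (\<lambda>w. X0 w + indicator A1 w *\<^sub>R v)) S =
          emeasure (distr M borel (\<lambda>w. X0 w + indicator A2 w *\<^sub>R v)) S"
      unfolding emeasure_distr[OF m1 S] emeasure_distr[OF m2 S] emeasure_eq_measure
      using key[OF A(1) _ S] key[OF A(2) _ S] A unfolding Bk_def by simp
  qed simp
qed

theorem theorem3p3:
  fixes M0 M :: "'w::polish_space measure"
    and f :: "'h::{real_inner, complete_space, second_countable_topology} measure \<Rightarrow> 'u::{real_inner, complete_space, second_countable_topology}"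
    and X0 :: "'w \<Rightarrow> 'h"
    and N :: nat and x :: "nat \<Rightarrow> 'h" and p :: "nat \<Rightarrow> real"
    and L :: "('w \<Rightarrow> 'h) \<Rightarrow> 'u"
    and A :: "'w set" and u :: 'h
  assumes "prob_space M0" and "sets M0 = sets borel" and "M = completion M0"
    and "atomless M"
    and "memL2 M X0"
    and "inj_on x {1..N}"
    and "\<And>k. k \<in> {1..N} \<Longrightarrow> p k > 0"
    and "(\<Sum>k=1..N. p k) = 1"
    and "\<And>B. B \<in> sets borel \<Longrightarrow>
           measure (distr M borel X0) B = (\<Sum>k=1..N. p k * indicator B (x k))"
    and "lift_frechet M f X0 L"
    and "Lambda2 M L"
    and "A \<in> sets M"
  shows "vmeasure L A u =
    vm_integral M L (\<lambda>w. real_cond_exp M (vimage_algebra (space M) X0 borel) (indicator A) w *\<^sub>R u)"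
  proof -
  interpret M0: prob_space M0 by fact
  have "prob_space M" using M0.prob_space_completion assms(3) by simp
  then interpret prob_space M .
  have fm: "finite_measure M" by unfold_locales
  have X0m: "X0 \<in> borel_measurable M" using assms(5) memL2_def by auto
  have bl: "bounded_linear_L2 M L" using assms(10) lift_frechet_def by auto
  define B where "B k = X0 -` {x k} \<inter> space M" for k
  have Bs: "B k \<in> sets M" for k unfolding B_def using measurable_sets[OF X0m, of "{x k}"] by simp
  have law: "measure M (X0 -` T \<inter> space M) = (\<Sum>k=1..N. p k * indicator T (x k))" if "T \<in> sets borel" for T
    using assms(9)[OF that] measure_distr[OF X0m that] by simp
  have pB: "measure M (B k) = p k" if k: "k \<in> {1..N}" for k
  proof -
    have "measure M (B k) = (\<Sum>j=1..N. p j * indicator {x k} (x j))" unfolding B_def by (rule law) simp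
    also have "\<dots> = (\<Sum>j=1..N. if j = k then p j else 0)"
    proof (intro sum.cong refl)
      fix j assume j: "j \<in> {1..N}"
      have "x j = x k \<longleftrightarrow> j = k" using inj_on_eq_iff[OF assms(6) j k] by simp
      then show "p j * indicator {x k} (x j) = (if j = k then p j else 0)" by (simp add: indicator_def)
    qed
    also have "\<dots> = p k" using k by simp
    finally show ?thesis .
  qed
  have Bdisj: "disjoint_family_on B {1..N}"
  proof (unfold disjoint_family_on_def, intro ballI impI)
    fix i j assume ij: "i \<in> {1..N}" "j \<in> {1..N}" "i \<noteq> j"
    then have "x i \<noteq> x j" using inj_on_eq_iff[OF assms(6) ij(1,2)] by simp
    then show "B i \<inter> B j = {}" unfolding B_def by auto
  qed
  define Bu where "Bu = (\<Union>k\<in>{1..N}. B k)"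
  have Bu_eq: "Bu = X0 -` (x ` {1..N}) \<inter> space M" unfolding Bu_def B_def by auto
  have Bus: "Bu \<in> sets M" unfolding Bu_def using Bs by auto
  have mBu: "measure M Bu = 1"
  proof -
    have "measure M Bu = (\<Sum>k=1..N. p k * indicator (x ` {1..N}) (x k))" unfolding Bu_eq
      by (rule law) (simp add: finite_imp_closed borel_closed)
    also have "\<dots> = (\<Sum>k=1..N. p k)" by (intro sum.cong) auto
    finally show ?thesis using assms(8) by simp
  qed
  have null: "measure M (space M - Bu) = 0" using prob_compl[OF Bus] mBu by simp
  define g where "g S = L (\<lambda>w. indicator S w *\<^sub>R u)" for S
  have g_add: "g (S1 \<union> S2) = g S1 + g S2" if "S1 \<in> sets M" "S2 \<in> sets M" "S1 \<inter> S2 = {}" for S1 S2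
  proof -
    have "(\<lambda>w. indicator (S1 \<union> S2) w *\<^sub>R u) = (\<lambda>w. indicator S1 w *\<^sub>R u + indicator S2 w *\<^sub>R u)"
      using that by (auto simp: indicator_def fun_eq_iff)
    then show ?thesis unfolding g_def using L_add[OF bl memL2_ind[OF fm that(1)] memL2_ind[OF fm that(2)]] by simp
  qed
  obtain K where K: "\<forall>Y. memL2 M Y \<longrightarrow> norm (L Y) \<le> K * l2norm M Y" using L_bound[OF bl] by blast
  have g_bd: "norm (g S) \<le> (K * norm u) * sqrt (measure M S)" if "S \<in> sets M" for S
  proof -
    have "norm (g S) \<le> K * l2norm M (\<lambda>w. indicator S w *\<^sub>R u)" unfolding g_def
      by (rule K[rule_format, OF memL2_ind[OF fm that]])
    then show ?thesis using l2norm_ind[OF fm that, of u] by (simp add: mult.assoc)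
  qed
  have g_null: "g S = 0" if "S \<in> sets M" "measure M S = 0" for S
    using g_bd[OF that(1)] that(2) by simp
  have g_inv: "g A1 = g A2" if A12: "A1 \<in> sets M" "A2 \<in> sets M" "A1 \<subseteq> B k" "A2 \<subseteq> B k"
    "measure M A1 = measure M A2" for A1 A2 k
  proof -
    define r where "r = norm u * sqrt (measure M A1)"
    have r0: "r \<ge> 0" unfolding r_def by simp
    have law_eq: "distr M borel (\<lambda>w. X0 w + indicator A1 w *\<^sub>R v) = distr M borel (\<lambda>w. X0 w + indicator A2 w *\<^sub>R v)" for v
      using law_swap[OF fm X0m A12(1,2) _ _ A12(5), of "x k" v] A12(3,4) unfolding B_def by simp
    have fr: "\<forall>e>0. \<exists>d>0. \<forall>Y. memL2 M Y \<longrightarrow> l2norm M Y < d \<longrightarrow>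
        norm (f (distr M borel (\<lambda>w. X0 w + Y w)) - f (distr M borel X0) - L Y) \<le> e * l2norm M Y"
      using assms(10) unfolding lift_frechet_def by blast
    have est: "norm (g A1 - g A2) \<le> 2 * e * r" if e: "e > 0" for e
    proof -
      obtain d where d: "d > 0" "\<forall>Y. memL2 M Y \<longrightarrow> l2norm M Y < d \<longrightarrow>
        norm (f (distr M borel (\<lambda>w. X0 w + Y w)) - f (distr M borel X0) - L Y) \<le> e * l2norm M Y"
        using fr e by blast
      define t where "t = d / (r + 1)"
      have t0: "t > 0" unfolding t_def using d r0 by simp
      have tr: "t * r < d" unfolding t_def using d r0 by (simp add: field_simps)
      define Y1 where "Y1 = (\<lambda>w. indicator A1 w *\<^sub>R (t *\<^sub>R u))"
      define Y2 where "Y2 = (\<lambda>w. indicator A2 w *\<^sub>R (t *\<^sub>R u))"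
      have mY1: "memL2 M Y1" unfolding Y1_def by (rule memL2_ind[OF fm A12(1)])
      have mY2: "memL2 M Y2" unfolding Y2_def by (rule memL2_ind[OF fm A12(2)])
      have lY1: "l2norm M Y1 = t * r" unfolding Y1_def l2norm_ind[OF fm A12(1)] r_def using t0 by simp
      have lY2: "l2norm M Y2 = t * r" unfolding Y2_def l2norm_ind[OF fm A12(2)] r_def A12(5) using t0 by simp
      have LY1: "L Y1 = t *\<^sub>R g A1"
      proof -
        have "Y1 = (\<lambda>w. t *\<^sub>R (indicator A1 w *\<^sub>R u))" unfolding Y1_def by (simp add: fun_eq_iff)
        then show ?thesis unfolding g_def using L_scale[OF bl memL2_ind[OF fm A12(1)]] by simp
      qed
      have LY2: "L Y2 = t *\<^sub>R g A2"
      proof -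
        have "Y2 = (\<lambda>w. t *\<^sub>R (indicator A2 w *\<^sub>R u))" unfolding Y2_def by (simp add: fun_eq_iff)
        then show ?thesis unfolding g_def using L_scale[OF bl memL2_ind[OF fm A12(2)]] by simp
      qed
      have deq: "distr M borel (\<lambda>w. X0 w + Y1 w) = distr M borel (\<lambda>w. X0 w + Y2 w)"
        unfolding Y1_def Y2_def by (rule law_eq)
      define F1 where "F1 = f (distr M borel (\<lambda>w. X0 w + Y1 w)) - f (distr M borel X0)"
      have n1: "norm (F1 - t *\<^sub>R g A1) \<le> e * (t * r)"
        using d(2)[rule_format, OF mY1] lY1 tr LY1 unfolding F1_def by simp
      have n2: "norm (F1 - t *\<^sub>R g A2) \<le> e * (t * r)"
        using d(2)[rule_format, OF mY2] lY2 tr LY2 deq unfolding F1_def by simp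
      have "t *\<^sub>R (g A1 - g A2) = (F1 - t *\<^sub>R g A2) - (F1 - t *\<^sub>R g A1)" by (simp add: algebra_simps)
      then have "norm (t *\<^sub>R (g A1 - g A2)) \<le> norm (F1 - t *\<^sub>R g A2) + norm (F1 - t *\<^sub>R g A1)"
        by (metis norm_triangle_ineq4)
      also have "\<dots> \<le> t * (2 * e * r)" using n1 n2 by (simp add: algebra_simps)
      finally have "t * norm (g A1 - g A2) \<le> t * (2 * e * r)" using t0 by simp
      then show ?thesis using t0 by simp
    qed
    show ?thesis
    proof (rule ccontr)
      assume "g A1 \<noteq> g A2"
      then have nD: "norm (g A1 - g A2) > 0" by simp
      define n where "n = norm (g A1 - g A2)"
      have n0: "n > 0" using nD unfolding n_def .
      define e where "e = n / (4 * (r + 1))"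
      have e0: "e > 0" unfolding e_def using n0 r0 by simp
      have "2 * e * r < n" unfolding e_def using n0 r0
        by (simp add: field_simps) (intro add_pos_nonneg mult_nonneg_nonneg, auto)
      with est[OF e0] show False unfolding n_def by simp
    qed
  qed
  have g_lin: "g A' = (measure M A' / p k) *\<^sub>R g (B k)" if kk: "k \<in> {1..N}" "A' \<in> sets M" "A' \<subseteq> B k" for A' k
  proof -
    have "g A' = (measure M A' / measure M (B k)) *\<^sub>R g (B k)"
    proof (rule phi_linear[OF assms(4) Bs, where K="K * norm u"])
      show "0 < measure M (B k)" using pB[OF kk(1)] assms(7)[OF kk(1)] by simp
      show "\<And>S T. S \<in> sets M \<Longrightarrow> T \<in> sets M \<Longrightarrow> S \<subseteq> B k \<Longrightarrow> T \<subseteq> B k \<Longrightarrow>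
          measure M S = measure M T \<Longrightarrow> g S = g T" by (rule g_inv)
      show "\<And>S T. S \<in> sets M \<Longrightarrow> T \<in> sets M \<Longrightarrow> S \<inter> T = {} \<Longrightarrow> g (S \<union> T) = g S + g T"
        by (rule g_add)
      show "\<And>S. S \<in> sets M \<Longrightarrow> norm (g S) \<le> K * norm u * sqrt (measure M S)" by (rule g_bd)
      show "A' \<in> sets M" "A' \<subseteq> B k" using kk by auto
    qed
    then show ?thesis using pB[OF kk(1)] by simp
  qed
  define c where "c k = measure M (A \<inter> B k) / p k" for k
  have gA: "g A = (\<Sum>k=1..N. c k *\<^sub>R g (B k))"
  proof -
    have g0: "g {} = 0" using g_null[of "{}"] by simp
    have ind: "S \<subseteq> {1..N} \<longrightarrow> g (A \<inter> (\<Union>k\<in>S. B k)) = (\<Sum>k\<in>S. g (A \<inter> B k))" if "finite S" for S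
      using that
    proof (induction S rule: finite_induct)
      case empty then show ?case using g0 by simp
    next
      case (insert j S)
      show ?case
      proof
        assume sub: "insert j S \<subseteq> {1..N}"
        have eq: "A \<inter> (\<Union>k\<in>insert j S. B k) = (A \<inter> B j) \<union> (A \<inter> (\<Union>k\<in>S. B k))" by auto
        have dj: "(A \<inter> B j) \<inter> (A \<inter> (\<Union>k\<in>S. B k)) = {}"
        proof -
          have "B j \<inter> B i = {}" if "i \<in> S" for i
          proof -
            have "i \<noteq> j" "i \<in> {1..N}" "j \<in> {1..N}" using that insert.hyps(2) sub by auto
            then show ?thesis using Bdisj unfolding disjoint_family_on_def by metis
          qed
          then show ?thesis by blast
        qed
        have s1: "A \<inter> B j \<in> sets M" using assms(12) Bs by auto
        have s2: "A \<inter> (\<Union>k\<in>S. B k) \<in> sets M" using assms(12) Bs insert.hyps(1) by auto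
        show "g (A \<inter> (\<Union>k\<in>insert j S. B k)) = (\<Sum>k\<in>insert j S. g (A \<inter> B k))"
          unfolding eq g_add[OF s1 s2 dj] using insert sub by simp
      qed
    qed
    have sA: "g (A \<inter> Bu) = (\<Sum>k=1..N. g (A \<inter> B k))" using ind[of "{1..N}"] unfolding Bu_def by simp
    have nA: "g (A - Bu) = 0"
    proof (rule g_null)
      show "A - Bu \<in> sets M" using assms(12) Bus by auto
      have "measure M (A - Bu) \<le> measure M (space M - Bu)"
        using assms(12) Bus sets.sets_into_space[OF assms(12)] by (intro finite_measure_mono) auto
      then show "measure M (A - Bu) = 0" using null measure_nonneg[of M "A - Bu"] by linarith
    qed
    have "g A = g ((A \<inter> Bu) \<union> (A - Bu))" by (metis Int_Diff_Un)
    also have "\<dots> = g (A \<inter> Bu) + g (A - Bu)" using assms(12) Bus by (intro g_add) auto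
    also have "\<dots> = (\<Sum>k=1..N. g (A \<inter> B k))" using sA nA by simp
    also have "\<dots> = (\<Sum>k=1..N. c k *\<^sub>R g (B k))"
    proof (intro sum.cong refl)
      fix k assume k: "k \<in> {1..N}"
      show "g (A \<inter> B k) = c k *\<^sub>R g (B k)" unfolding c_def
        by (rule g_lin[OF k]) (use assms(12) Bs in auto)
    qed
    finally show ?thesis .
  qed
  define xs0 where "xs0 = map (\<lambda>k. (B k, c k *\<^sub>R u)) [1..<Suc N]"
  have su: "set [1..<Suc N] = {1..N}" by auto
  have si: "step_int L xs0 = (\<Sum>k=1..N. c k *\<^sub>R g (B k))"
  proof -
    have vm: "vmeasure L (B k) (c k *\<^sub>R u) = c k *\<^sub>R g (B k)" for k
    proof -
      have "(\<lambda>w. indicator (B k) w *\<^sub>R (c k *\<^sub>R u)) = (\<lambda>w. c k *\<^sub>R (indicator (B k) w *\<^sub>R u))"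
        by (simp add: fun_eq_iff)
      then show ?thesis unfolding vmeasure_def g_def using L_scale[OF bl memL2_ind[OF fm Bs]] by simp
    qed
    have "step_int L xs0 = sum_list (map (\<lambda>k. vmeasure L (B k) (c k *\<^sub>R u)) [1..<Suc N])"
      unfolding step_int_def xs0_def by (simp add: o_def)
    also have "\<dots> = (\<Sum>k\<in>set [1..<Suc N]. vmeasure L (B k) (c k *\<^sub>R u))"
      by (rule sum_set_upt_conv_sum_list_nat[symmetric])
    also have "\<dots> = (\<Sum>k=1..N. c k *\<^sub>R g (B k))" unfolding su vm ..
    finally show ?thesis .
  qed
  have Zeq: "step_fun xs0 w = (\<Sum>k=1..N. c k * indicator (B k) w) *\<^sub>R u" for w
  proof -
    have "step_fun xs0 w = sum_list (map (\<lambda>k. indicator (B k) w *\<^sub>R (c k *\<^sub>R u)) [1..<Suc N])"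
      unfolding step_fun_def xs0_def by (simp add: o_def)
    also have "\<dots> = (\<Sum>k\<in>set [1..<Suc N]. indicator (B k) w *\<^sub>R (c k *\<^sub>R u))"
      by (rule sum_set_upt_conv_sum_list_nat[symmetric])
    also have "\<dots> = (\<Sum>k=1..N. c k * indicator (B k) w) *\<^sub>R u"
      unfolding su scaleR_sum_left by (intro sum.cong refl) (simp add: mult.commute)
    finally show ?thesis .
  qed
  have xs0rep: "step_rep M xs0"
    unfolding step_rep_def
  proof
    show "\<forall>i<length xs0. fst (xs0 ! i) \<in> sets M" unfolding xs0_def using Bs by simp
    show "disjoint_family_on (\<lambda>i. fst (xs0 ! i)) {..<length xs0}"
    proof (unfold disjoint_family_on_def, intro ballI impI)
      fix i j assume ij: "i \<in> {..<length xs0}" "j \<in> {..<length xs0}" "i \<noteq> j"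
      then have "i < N" "j < N" unfolding xs0_def by (auto simp del: upt_Suc)
      then have "fst (xs0 ! i) = B (Suc i)" "fst (xs0 ! j) = B (Suc j)" unfolding xs0_def
        by (simp_all add: nth_upt del: upt_Suc)
      moreover have "B (Suc i) \<inter> B (Suc j) = {}" using Bdisj ij \<open>i < N\<close> \<open>j < N\<close>
        unfolding disjoint_family_on_def by auto
      ultimately show "fst (xs0 ! i) \<inter> fst (xs0 ! j) = {}" by simp
    qed
  qed
  define F where "F = vimage_algebra (space M) X0 borel"
  define Y where "Y = (\<lambda>w. real_cond_exp M F (indicator A) w *\<^sub>R u)"
  have intI: "integrable M (indicator S :: 'w \<Rightarrow> real)" if "S \<in> sets M" for S
    by (rule integrable_real_indicator[OF that]) (simp add: less_top[symmetric])
  have decomp: "measure M E = (\<Sum>k=1..N. measure M (E \<inter> B k))" if E: "E \<in> sets M" for E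
  proof -
    have e1: "measure M E = measure M (E \<inter> Bu) + measure M (E - Bu)"
      using E Bus by (metis Int_Diff_Un Int_Diff_disjoint finite_measure_Union sets.Diff sets.Int)
    have "measure M (E - Bu) \<le> measure M (space M - Bu)"
      using E Bus sets.sets_into_space[OF E] by (intro finite_measure_mono) auto
    then have e2: "measure M (E - Bu) = 0" using null measure_nonneg[of M "E - Bu"] by linarith
    have "E \<inter> Bu = (\<Union>k\<in>{1..N}. E \<inter> B k)" unfolding Bu_def by auto
    moreover have "measure M (\<Union>k\<in>{1..N}. E \<inter> B k) = (\<Sum>k=1..N. measure M (E \<inter> B k))"
    proof (rule finite_measure_finite_Union)
      show "(\<lambda>k. E \<inter> B k) ` {1..N} \<subseteq> sets M" using E Bs by auto
      show "disjoint_family_on (\<lambda>k. E \<inter> B k) {1..N}" using Bdisj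
        unfolding disjoint_family_on_def by blast
    qed simp
    ultimately show ?thesis using e1 e2 by simp
  qed
  have sub: "subalgebra M F"
    unfolding subalgebra_def F_def
  proof
    show "space (vimage_algebra (space M) X0 borel) = space M" by simp
    have X0f: "X0 \<in> space M \<rightarrow> space borel" by simp
    show "sets (vimage_algebra (space M) X0 borel) \<subseteq> sets M"
      unfolding sets_vimage_algebra2[OF X0f] using measurable_sets[OF X0m] by auto
  qed
  interpret FS: finite_measure_subalgebra M F
    using fm sub by (simp add: finite_measure_subalgebra_def finite_measure_subalgebra_axioms_def)
  have BF: "B k \<in> sets F" for k unfolding F_def B_def by (rule in_vimage_algebra) simp
  define h where "h w = (\<Sum>k=1..N. c k * indicator (B k) w)" for w
  have hF: "h \<in> borel_measurable F" unfolding h_def using BF by measurable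
  have inth: "integrable M h" unfolding h_def
    by (intro Bochner_Integration.integrable_sum integrable_mult_right intI Bs)
  have AEh: "AE w in M. real_cond_exp M F (indicator A) w = h w"
  proof (rule FS.real_cond_exp_charact)
    fix S assume "S \<in> sets F"
    then obtain T where T: "T \<in> sets borel" "S = X0 -` T \<inter> space M"
      unfolding F_def using sets_vimage_algebra2[of X0 "space M" borel] by auto
    have SM: "S \<in> sets M" using T measurable_sets[OF X0m T(1)] by simp
    have SB: "S \<inter> B k = (if x k \<in> T then B k else {})" for k unfolding T(2) B_def by auto
    have "(\<integral>w\<in>S. (indicator A w :: real) \<partial>M) = (\<integral>w. indicator (S \<inter> A) w \<partial>M)"
      unfolding set_lebesgue_integral_def
      by (intro Bochner_Integration.integral_cong refl) (simp add: indicator_inter_arith)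
    also have "\<dots> = measure M (S \<inter> A)" using SM assms(12) by (simp add: Int_absorb2 sets.sets_into_space)
    also have "\<dots> = (\<Sum>k=1..N. measure M (S \<inter> A \<inter> B k))" using SM assms(12) by (intro decomp) auto
    also have "\<dots> = (\<Sum>k=1..N. if x k \<in> T then measure M (A \<inter> B k) else 0)"
    proof (intro sum.cong refl)
      fix k
      have "S \<inter> A \<inter> B k = A \<inter> (S \<inter> B k)" by blast
      then have "S \<inter> A \<inter> B k = (if x k \<in> T then A \<inter> B k else {})" unfolding SB[of k] by simp
      then show "measure M (S \<inter> A \<inter> B k) = (if x k \<in> T then measure M (A \<inter> B k) else 0)" by simp
    qed
    finally have lhs: "(\<integral>w\<in>S. (indicator A w :: real) \<partial>M) = (\<Sum>k=1..N. if x k \<in> T then measure M (A \<inter> B k) else 0)" .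
    have "(\<integral>w\<in>S. h w \<partial>M) = (\<integral>w. (\<Sum>k=1..N. c k * indicator (S \<inter> B k) w) \<partial>M)"
      unfolding set_lebesgue_integral_def h_def
      by (intro Bochner_Integration.integral_cong refl) (simp only: real_scaleR_def sum_distrib_left indicator_inter_arith mult_ac)
    also have "\<dots> = (\<Sum>k=1..N. c k * measure M (S \<inter> B k))"
      using SM Bs by (subst Bochner_Integration.integral_sum) (auto intro!: intI simp: Int_absorb2 sets.sets_into_space)
    also have "\<dots> = (\<Sum>k=1..N. if x k \<in> T then measure M (A \<inter> B k) else 0)"
    proof (intro sum.cong refl)
      fix k assume k: "k \<in> {1..N}"
      have "c k * p k = measure M (A \<inter> B k)" unfolding c_def using assms(7)[OF k] by simp
      then show "c k * measure M (S \<inter> B k) = (if x k \<in> T then measure M (A \<inter> B k) else 0)"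
        unfolding SB using pB[OF k] by simp
    qed
    finally show "(\<integral>w\<in>S. (indicator A w :: real) \<partial>M) = (\<integral>w\<in>S. h w \<partial>M)" using lhs by simp
  next
    show "integrable M (indicator A :: 'w \<Rightarrow> real)" by (rule intI[OF assms(12)])
  qed (fact inth, fact hF)
  have AEYZ: "AE w in M. Y w = step_fun xs0 w"
    using AEh by eventually_elim (simp add: Y_def Zeq h_def)
  have memZ: "memL2 M (step_fun xs0)" and LZ: "step_int L xs0 = L (step_fun xs0)"
    using step_int_L[OF bl fm, of xs0] Bs unfolding xs0_def by auto
  have memY: "memL2 M Y"
  proof (rule memL2_AE[OF memZ _ AEYZ])
    have rm[measurable]: "real_cond_exp M F (indicator A) \<in> borel_measurable M"
      by (rule borel_measurable_cond_exp2)
    show "Y \<in> borel_measurable M" unfolding Y_def by measurable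
  qed
  have LY: "L Y = step_int L xs0" using L_AE_eq[OF bl memY memZ AEYZ] LZ by simp
  have VI: "vm_integral M L Y = step_int L xs0"
    unfolding vm_integral_def
  proof (rule the_equality)
    show "\<forall>Ys. (\<forall>n. step_rep M (Ys n)) \<longrightarrow>
       (\<lambda>n. l2norm M (\<lambda>w. step_fun (Ys n) w - Y w)) \<longlonglongrightarrow> 0 \<longrightarrow>
       (AE w in M. (\<lambda>n. step_fun (Ys n) w) \<longlonglongrightarrow> Y w) \<longrightarrow>
       (\<lambda>n. step_int L (Ys n)) \<longlonglongrightarrow> step_int L xs0"
    proof (intro allI impI)
      fix Ys assume rep: "\<forall>n. step_rep M (Ys n)"
        and l2: "(\<lambda>n. l2norm M (\<lambda>w. step_fun (Ys n) w - Y w)) \<longlonglongrightarrow> 0"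
      have sf: "memL2 M (step_fun (Ys n)) \<and> step_int L (Ys n) = L (step_fun (Ys n))" for n
      proof (rule step_int_L[OF bl fm])
        show "\<forall>(S, z)\<in>set (Ys n). S \<in> sets M"
        proof
          fix q assume "q \<in> set (Ys n)"
          then obtain i where "i < length (Ys n)" "Ys n ! i = q" by (auto simp: in_set_conv_nth)
          moreover have "fst (Ys n ! i) \<in> sets M" using rep \<open>i < length (Ys n)\<close> unfolding step_rep_def by blast
          ultimately have "fst q \<in> sets M" by simp
          then show "case q of (S, z) \<Rightarrow> S \<in> sets M" by (simp add: case_prod_beta)
        qed
      qed
      have bnd: "norm (step_int L (Ys n) - step_int L xs0) \<le> K * l2norm M (\<lambda>w. step_fun (Ys n) w - Y w)" for n
      proof -
        have "step_int L (Ys n) - step_int L xs0 = L (\<lambda>w. step_fun (Ys n) w - Y w)"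
          using sf[of n] LY L_diff[OF bl, of "step_fun (Ys n)" Y] memY by simp
        then show ?thesis using K memL2_diff[of M "step_fun (Ys n)" Y] sf[of n] memY by simp
      qed
      have "(\<lambda>n. step_int L (Ys n) - step_int L xs0) \<longlonglongrightarrow> 0"
        by (rule Lim_null_comparison[OF always_eventually[OF allI[OF bnd]]])
          (rule tendsto_mult_right_zero[OF l2])
      then have "(\<lambda>n. (step_int L (Ys n) - step_int L xs0) + step_int L xs0) \<longlonglongrightarrow> 0 + step_int L xs0"
        by (intro tendsto_add tendsto_const)
      then show "(\<lambda>n. step_int L (Ys n)) \<longlonglongrightarrow> step_int L xs0" by simp
    qed
  next
    fix v assume H: "\<forall>Ys. (\<forall>n. step_rep M (Ys n)) \<longrightarrow>
       (\<lambda>n. l2norm M (\<lambda>w. step_fun (Ys n) w - Y w)) \<longlonglongrightarrow> 0 \<longrightarrow>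
       (AE w in M. (\<lambda>n. step_fun (Ys n) w) \<longlonglongrightarrow> Y w) \<longrightarrow>
       (\<lambda>n. step_int L (Ys n)) \<longlonglongrightarrow> v"
    have z: "l2norm M (\<lambda>w. step_fun xs0 w - Y w) = 0"
      by (rule l2norm_AE0) (use AEYZ in \<open>auto elim: AE_mp\<close>)
    have ae: "AE w in M. (\<lambda>n. step_fun xs0 w) \<longlonglongrightarrow> Y w"
      using AEYZ by eventually_elim simp
    have "(\<lambda>n. step_int L xs0) \<longlonglongrightarrow> v"
      using H[rule_format, of "\<lambda>n. xs0"] xs0rep z ae by simp
    then show "v = step_int L xs0" using LIMSEQ_const_iff by metis
  qed
  have "vmeasure L A u = g A" unfolding vmeasure_def g_def by simp
  then show ?thesis using gA si VI Y_def F_def by simp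
qed

end
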